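(* Let $n,r\ge 1$ be integers, let $u$ be a vertex of $G(n,r)$, let $0\le k\le r$, and let $(i_1,j_1),\dots,(i_k,j_k)$ be positions in an $n\times n$ matrix (not necessarily distinct) such that $u\ge E_n(i_1,j_1)+\dots+E_n(i_k,j_k)$ entrywise. Then there exist vertices $u_1,\dots,u_r$ of $G(n,1)$ (i.e. $n\times n$ permutation matrices) with $u=u_1+\dots+u_r$ and such that $u_1+\dots+u_l\ge E_n(i_1,j_1)+\dots+E_n(i_l,j_l)$ entrywise for every $1\le l\le k$.
   Context: For integers $n,r\ge 1$, $G(n,r)$ is the graph whose vertices are the $n\times n$ matrices with non-negative integer entries all of whose row sums and column sums equal $r$ (adjacency is irrelevant here). $E_n(i,j)$ denotes the $n\times n$ matrix with all entries $0$ except the entry in position $(i,j)$, which is $1$. Matrix inequalities are entrywise. *)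

theory Defs
  imports Main
begin

text \<open>An n x n matrix with natural-number entries is modelled as a function
  nat => nat => nat, indices 0..n-1, with all entries outside that range zero.\<close>

definition is_matrix :: "nat \<Rightarrow> (nat \<Rightarrow> nat \<Rightarrow> nat) \<Rightarrow> bool" where
  "is_matrix n A \<longleftrightarrow> (\<forall>i j. (n \<le> i \<or> n \<le> j) \<longrightarrow> A i j = 0)"

definition G_vert :: "nat \<Rightarrow> nat \<Rightarrow> (nat \<Rightarrow> nat \<Rightarrow> nat) \<Rightarrow> bool" where
  "G_vert n r A \<longleftrightarrow> is_matrix n A
     \<and> (\<forall>i<n. (\<Sum>j<n. A i j) = r) \<and> (\<forall>j<n. (\<Sum>i<n. A i j) = r)"

definition E_mat :: "nat \<Rightarrow> nat \<Rightarrow> nat \<Rightarrow> nat \<Rightarrow> nat" where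
  "E_mat i j = (\<lambda>a b. if a = i \<and> b = j then 1 else 0)"

definition mat_le :: "(nat \<Rightarrow> nat \<Rightarrow> nat) \<Rightarrow> (nat \<Rightarrow> nat \<Rightarrow> nat) \<Rightarrow> bool" where
  "mat_le A B \<longleftrightarrow> (\<forall>a b. A a b \<le> B a b)"

end

theory Submission
  imports Defs
begin


lemma hall:
  assumes "finite I" "\<forall>i\<in>I. finite (A i)" "\<forall>J\<subseteq>I. card J \<le> card (\<Union>(A ` J))"
  shows "\<exists>f. inj_on f I \<and> (\<forall>i\<in>I. f i \<in> A i)"
  using assms
proof (induction "card I" arbitrary: I A rule: less_induct)
  case less
  show ?case
  proof (cases "I = {}")
    case True then show ?thesis by auto
  next
    case False
    show ?thesis
    proof (cases "\<exists>J. J \<subseteq> I \<and> J \<noteq> {} \<and> J \<noteq> I \<and> card (\<Union>(A ` J)) = card J")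
      case True
      then obtain J where J: "J \<subseteq> I" "J \<noteq> {}" "J \<noteq> I" "card (\<Union>(A ` J)) = card J" by blast
      have fJ: "finite J" using J(1) less.prems(1) finite_subset by blast
      have cJ: "card J < card I" using J(1,3) less.prems(1) by (meson psubsetI psubset_card_mono)
      obtain f1 where f1: "inj_on f1 J" "\<forall>i\<in>J. f1 i \<in> A i"
      proof -
        have h1: "\<forall>i\<in>J. finite (A i)" using less.prems(2) J(1) by auto
        have h2: "\<forall>J'\<subseteq>J. card J' \<le> card (\<Union>(A ` J'))" using less.prems(3) J(1) by auto
        show ?thesis using less.hyps[OF cJ fJ, of A, OF h1 h2] that by blast
      qed
      define B where "B = \<Union>(A ` J)"
      define A' where "A' i = A i - B" for i
      have fB: "finite B" using fJ less.prems(2) J(1) B_def by auto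
      have cIJ: "card (I - J) < card I"
      proof -
        have "card J > 0" using fJ J(2) by (simp add: card_gt_0_iff)
        then show ?thesis using card_Diff_subset[OF fJ J(1)] cJ by linarith
      qed
      have hall2: "\<forall>K\<subseteq>I-J. card K \<le> card (\<Union>(A' ` K))"
      proof (intro allI impI)
        fix K assume K: "K \<subseteq> I - J"
        have fK: "finite K" using K less.prems(1) finite_subset by blast
        have fU: "finite (\<Union>(A' ` K))" using fK K less.prems(2) A'_def by auto
        have KJ: "K \<union> J \<subseteq> I" using K J(1) by auto
        have "card (K \<union> J) \<le> card (\<Union>(A ` (K \<union> J)))" using less.prems(3) KJ by blast
        moreover have "card (K \<union> J) = card K + card J" using K fK fJ by (subst card_Un_disjoint) auto
        moreover have "\<Union>(A ` (K \<union> J)) = \<Union>(A' ` K) \<union> B" by (auto simp: A'_def B_def)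
        moreover have "card (\<Union>(A' ` K) \<union> B) = card (\<Union>(A' ` K)) + card B"
          using fU fB by (subst card_Un_disjoint) (auto simp: A'_def)
        ultimately show "card K \<le> card (\<Union>(A' ` K))" using J(4) B_def by simp
      qed
      obtain f2 where f2: "inj_on f2 (I-J)" "\<forall>i\<in>I-J. f2 i \<in> A' i"
        using less.hyps[OF cIJ, of A'] less.prems hall2 A'_def by auto
      define f where "f i = (if i \<in> J then f1 i else f2 i)" for i
      have "inj_on f I"
        unfolding inj_on_def
      proof (intro ballI impI)
        fix i j assume ij: "i \<in> I" "j \<in> I" "f i = f j"
        show "i = j"
        proof (cases "i \<in> J"; cases "j \<in> J")
          assume "i \<in> J" "j \<in> J" then show ?thesis using ij f1 by (auto simp: f_def inj_on_def)
        next
          assume "i \<notin> J" "j \<notin> J" then show ?thesis using ij f2 by (auto simp: f_def inj_on_def)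
        next
          assume a: "i \<in> J" "j \<notin> J"
          then have "f i \<in> B" using f1 B_def f_def by auto
          moreover have "f j \<notin> B" using a ij(2) f2 by (auto simp: f_def A'_def)
          ultimately show ?thesis using ij by simp
        next
          assume a: "i \<notin> J" "j \<in> J"
          then have "f j \<in> B" using f1 B_def f_def by auto
          moreover have "f i \<notin> B" using a ij(1) f2 by (auto simp: f_def A'_def)
          ultimately show ?thesis using ij by simp
        qed
      qed
      moreover have "\<forall>i\<in>I. f i \<in> A i" using f1 f2 by (auto simp: f_def A'_def)
      ultimately show ?thesis by blast
    next
      case noncrit: False
      obtain i0 where i0: "i0 \<in> I" using False by blast
      have "card {i0} \<le> card (\<Union>(A ` {i0}))" using less.prems(3) i0 by blast
      then have "card {i0} \<le> card (A i0)" by simp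
      then have "A i0 \<noteq> {}" by auto
      then obtain x where x: "x \<in> A i0" by blast
      define A' where "A' i = A i - {x}" for i
      have cI: "card (I - {i0}) < card I" using i0 less.prems(1) by (metis card_Diff1_less)
      have hall2: "\<forall>K\<subseteq>I-{i0}. card K \<le> card (\<Union>(A' ` K))"
      proof (intro allI impI)
        fix K assume K: "K \<subseteq> I - {i0}"
        show "card K \<le> card (\<Union>(A' ` K))"
        proof (cases "K = {}")
          case True then show ?thesis by simp
        next
          case Kne: False
          have fK: "finite K" using K less.prems(1) finite_subset by blast
          have "card K \<le> card (\<Union>(A ` K))" using less.prems(3) K by auto
          moreover have "card (\<Union>(A ` K)) \<noteq> card K" using noncrit K Kne i0 by blast
          moreover have "\<Union>(A' ` K) = \<Union>(A ` K) - {x}" by (auto simp: A'_def)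
          moreover have "finite (\<Union>(A ` K))" using fK K less.prems(2) by auto
          ultimately show ?thesis by (simp add: card_Diff_singleton_if) linarith
        qed
      qed
      obtain f2 where f2: "inj_on f2 (I-{i0})" "\<forall>i\<in>I-{i0}. f2 i \<in> A' i"
        using less.hyps[OF cI, of A'] less.prems hall2 A'_def by auto
      define f where "f = f2(i0 := x)"
      have "inj_on f I" using f2 by (auto simp: f_def inj_on_def A'_def)
      moreover have "\<forall>i\<in>I. f i \<in> A i" using f2 x by (auto simp: f_def A'_def)
      ultimately show ?thesis by blast
    qed
  qed
qed



lemma perm_exists:
  assumes "G_vert n r u" "r \<ge> 1"
  shows "\<exists>P. G_vert n 1 P \<and> mat_le P u"
proof -
  define A where "A i = {j. j < n \<and> u i j > 0}" for i
  have rows: "\<forall>i<n. (\<Sum>j<n. u i j) = r" and cols: "\<forall>j<n. (\<Sum>i<n. u i j) = r"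
    and mat: "is_matrix n u" using assms(1) by (auto simp: G_vert_def)
  have hallc: "\<forall>J\<subseteq>{..<n}. card J \<le> card (\<Union>(A ` J))"
  proof (intro allI impI)
    fix J assume J: "J \<subseteq> {..<n}"
    define N where "N = \<Union>(A ` J)"
    have N1: "N \<subseteq> {..<n}" using A_def N_def by auto
    have N: "N \<subseteq> {..<n}" "finite N" using N1 finite_subset[OF N1] by auto
    have "r * card J = (\<Sum>i\<in>J. \<Sum>j<n. u i j)" using J rows by (simp add: subset_iff)
    also have "\<dots> = (\<Sum>i\<in>J. \<Sum>j\<in>N. u i j)"
    proof (rule sum.cong[OF refl])
      fix i assume i: "i \<in> J"
      show "(\<Sum>j<n. u i j) = (\<Sum>j\<in>N. u i j)"
        by (rule sum.mono_neutral_right) (use N i in \<open>auto simp: N_def A_def\<close>)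
    qed
    also have "\<dots> = (\<Sum>j\<in>N. \<Sum>i\<in>J. u i j)" by (rule sum.swap)
    also have "\<dots> \<le> (\<Sum>j\<in>N. \<Sum>i<n. u i j)"
      by (intro sum_mono sum_mono2) (use J in auto)
    also have "\<dots> = r * card N" using N cols by (simp add: subset_iff)
    finally have "r * card J \<le> r * card N" .
    thus "card J \<le> card (\<Union>(A ` J))" using assms(2) N_def by simp
  qed
  obtain f where f: "inj_on f {..<n}" "\<forall>i\<in>{..<n}. f i \<in> A i"
    using hall[of "{..<n}" A] hallc A_def by auto
  have fsub: "f ` {..<n} \<subseteq> {..<n}" using f A_def by auto
  have img: "f ` {..<n} = {..<n}"
    using fsub f(1) by (simp add: card_image card_subset_eq)
  define P where "P a b = (if a < n \<and> b < n \<and> f a = b then 1 else (0::nat))" for a b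
  have "is_matrix n P" by (auto simp: is_matrix_def P_def)
  moreover have "\<forall>i<n. (\<Sum>j<n. P i j) = 1"
  proof (intro allI impI)
    fix i assume i: "i < n"
    have "(\<Sum>j<n. P i j) = (\<Sum>j<n. if f i = j then 1 else 0)"
      using i by (intro sum.cong) (auto simp: P_def)
    also have "\<dots> = 1" using fsub i by (simp add: sum.delta image_subset_iff)
    finally show "(\<Sum>j<n. P i j) = 1" .
  qed
  moreover have "\<forall>j<n. (\<Sum>i<n. P i j) = 1"
  proof (intro allI impI)
    fix j assume j: "j < n"
    then obtain a0 where a0: "a0 < n" "f a0 = j" using img by (metis imageE lessThan_iff)
    have "(\<Sum>i<n. P i j) = (\<Sum>i<n. if i = a0 then 1 else 0)"
      using j a0 f(1) by (intro sum.cong) (auto simp: P_def inj_on_def)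
    also have "\<dots> = 1" using a0 by simp
    finally show "(\<Sum>i<n. P i j) = 1" .
  qed
  ultimately have "G_vert n 1 P" by (simp add: G_vert_def)
  moreover have "mat_le P u" using f by (auto simp: mat_le_def P_def A_def Suc_le_eq)
  ultimately show ?thesis by blast
qed

lemma decomp:
  "G_vert n r u \<Longrightarrow> \<exists>us. (\<forall>s\<in>{1..r}. G_vert n 1 (us s)) \<and> u = (\<lambda>a b. \<Sum>s=1..r. us s a b)"
proof (induction r arbitrary: u)
  case 0
  have "u = (\<lambda>a b. 0)"
  proof (intro ext)
    fix a b show "u a b = 0"
    proof (cases "a < n \<and> b < n")
      case True
      then have "(\<Sum>j<n. u a j) = 0" using 0 by (simp add: G_vert_def)
      then show ?thesis using True by simp
    next
      case False then show ?thesis using 0 by (auto simp: G_vert_def is_matrix_def)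
    qed
  qed
  then show ?case by simp
next
  case (Suc r)
  obtain P where P: "G_vert n 1 P" "mat_le P u" using perm_exists[OF Suc.prems] by auto
  define u' where "u' a b = u a b - P a b" for a b
  have le: "\<And>a b. P a b \<le> u a b" using P(2) by (simp add: mat_le_def)
  have "G_vert n r u'"
  proof -
    have m: "is_matrix n u'" using Suc.prems by (auto simp: G_vert_def is_matrix_def u'_def)
    have r1: "(\<Sum>j<n. u' i j) = r" if i: "i < n" for i
    proof -
      have "(\<Sum>j<n. u' i j) = (\<Sum>j<n. u i j) - (\<Sum>j<n. P i j)"
        unfolding u'_def by (rule sum_subtractf_nat) (rule le)
      also have "\<dots> = r" using i Suc.prems P(1) by (simp add: G_vert_def)
      finally show ?thesis .
    qed
    have c1: "(\<Sum>i<n. u' i j) = r" if j: "j < n" for j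
    proof -
      have "(\<Sum>i<n. u' i j) = (\<Sum>i<n. u i j) - (\<Sum>i<n. P i j)"
        unfolding u'_def by (rule sum_subtractf_nat) (rule le)
      also have "\<dots> = r" using j Suc.prems P(1) by (simp add: G_vert_def)
      finally show ?thesis .
    qed
    show ?thesis using m r1 c1 by (simp add: G_vert_def)
  qed
  then obtain us where us: "\<forall>s\<in>{1..r}. G_vert n 1 (us s)" "u' = (\<lambda>a b. \<Sum>s=1..r. us s a b)"
    using Suc.IH by blast
  define vs where "vs = us(Suc r := P)"
  have "\<forall>s\<in>{1..Suc r}. G_vert n 1 (vs s)" using us(1) P(1) by (auto simp: vs_def)
  moreover have "u = (\<lambda>a b. \<Sum>s=1..Suc r. vs s a b)"
  proof (intro ext)
    fix a b
    have e: "{1..Suc r} = insert (Suc r) {1..r}" by auto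
    have "(\<Sum>s=1..Suc r. vs s a b) = P a b + (\<Sum>s=1..r. us s a b)"
      unfolding e by (subst sum.insert) (auto simp: vs_def intro!: sum.cong)
    also have "\<dots> = P a b + u' a b" using us(2) by simp
    also have "\<dots> = u a b" using le[of a b] by (simp add: u'_def)
    finally show "u a b = (\<Sum>s=1..Suc r. vs s a b)" by simp
  qed
  ultimately show ?case by blast
qed



lemma main_ind:
  fixes pos :: "nat \<Rightarrow> nat \<times> nat"
  assumes G: "G_vert n r u"
  shows "k \<le> r \<Longrightarrow> mat_le (\<lambda>a b. \<Sum>t=1..k. E_mat (fst (pos t)) (snd (pos t)) a b) u \<Longrightarrow>
    \<exists>us. (\<forall>s\<in>{1..r}. G_vert n 1 (us s)) \<and> u = (\<lambda>a b. \<Sum>s=1..r. us s a b)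
      \<and> (\<forall>l\<le>k. mat_le (\<lambda>a b. \<Sum>t=1..l. E_mat (fst (pos t)) (snd (pos t)) a b) (\<lambda>a b. \<Sum>s=1..l. us s a b))"
proof (induction k)
  case 0
  obtain us where us: "\<forall>s\<in>{1..r}. G_vert n 1 (us s)" "u = (\<lambda>a b. \<Sum>s=1..r. us s a b)"
    using decomp[OF G] by blast
  have "\<forall>l\<le>0. mat_le (\<lambda>a b. \<Sum>t=1..l. E_mat (fst (pos t)) (snd (pos t)) a b) (\<lambda>a b. \<Sum>s=1..l. us s a b)"
    by (simp add: mat_le_def)
  then show ?case using us by blast
next
  case (Suc m)
  define C where "C l a b = (\<Sum>t=1..l. E_mat (fst (pos t)) (snd (pos t)) a b)" for l a b
  obtain xa xb where x: "pos (Suc m) = (xa, xb)" by (cases "pos (Suc m)") auto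
  have Cs: "C (Suc m) a b = C m a b + (if a = xa \<and> b = xb then 1 else 0)" for a b
    by (simp add: C_def x E_mat_def)
  have CleU: "C (Suc m) a b \<le> u a b" for a b using Suc.prems(2) by (simp add: mat_le_def C_def)
  have hm: "mat_le (\<lambda>a b. \<Sum>t=1..m. E_mat (fst (pos t)) (snd (pos t)) a b) u"
    unfolding mat_le_def
  proof (intro allI)
    fix a b show "(\<Sum>t=1..m. E_mat (fst (pos t)) (snd (pos t)) a b) \<le> u a b"
      using CleU[of a b] Cs[of a b] by (simp add: C_def)
  qed
  have IH: "\<exists>us. (\<forall>s\<in>{1..r}. G_vert n 1 (us s)) \<and> u = (\<lambda>a b. \<Sum>s=1..r. us s a b)
      \<and> (\<forall>l\<le>m. mat_le (\<lambda>a b. \<Sum>t=1..l. E_mat (fst (pos t)) (snd (pos t)) a b) (\<lambda>a b. \<Sum>s=1..l. us s a b))"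
    by (rule Suc.IH) (use Suc.prems(1) hm in simp_all)
  then obtain us where us: "\<forall>s\<in>{1..r}. G_vert n 1 (us s)" "u = (\<lambda>a b. \<Sum>s=1..r. us s a b)"
    "\<forall>l\<le>m. mat_le (\<lambda>a b. C l a b) (\<lambda>a b. \<Sum>s=1..l. us s a b)"
    unfolding C_def by blast
  define Pre where "Pre l a b = (\<Sum>s=1..l. us s a b)" for l a b
  have Pre_Suc: "Pre (Suc l) a b = Pre l a b + us (Suc l) a b" for l a b
    by (simp add: Pre_def)
  have CmP: "C m a b \<le> Pre m a b" for a b using us(3) by (auto simp: mat_le_def Pre_def)
  show ?case
  proof (cases "C (Suc m) xa xb \<le> Pre (Suc m) xa xb")
    case True
    have "\<forall>l\<le>Suc m. mat_le (C l) (Pre l)"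
    proof (intro allI impI)
      fix l assume l: "l \<le> Suc m"
      show "mat_le (C l) (Pre l)"
      proof (cases "l \<le> m")
        case True then show ?thesis using us(3) by (auto simp: mat_le_def Pre_def)
      next
        case False
        then have l: "l = Suc m" using l by simp
        show ?thesis unfolding mat_le_def l
        proof (intro allI)
          fix a b show "C (Suc m) a b \<le> Pre (Suc m) a b"
          proof (cases "a = xa \<and> b = xb")
            case True then show ?thesis using \<open>C (Suc m) xa xb \<le> Pre (Suc m) xa xb\<close> by simp
          next
            case False
            then have "C (Suc m) a b = C m a b" using Cs[of a b] by simp
            then show ?thesis using CmP[of a b] Pre_Suc[of m a b] by linarith
          qed
        qed
      qed
    qed
    then show ?thesis using us(1,2) unfolding C_def Pre_def by blast
  next
    case False
    have sr: "Suc m \<le> r" using Suc.prems(1) .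
    have split: "{1..r} = {1..Suc m} \<union> {Suc (Suc m)..r}" using sr by auto
    have "u xa xb = Pre (Suc m) xa xb + (\<Sum>s=Suc (Suc m)..r. us s xa xb)"
      using us(2) unfolding Pre_def split by (simp add: sum.union_disjoint)
    then have "(\<Sum>s=Suc (Suc m)..r. us s xa xb) > 0" using False CleU[of xa xb] by linarith
    then have "\<exists>s\<in>{Suc (Suc m)..r}. us s xa xb > 0"
    proof (rule contrapos_pp)
      assume "\<not> (\<exists>s\<in>{Suc (Suc m)..r}. us s xa xb > 0)"
      then have "\<forall>s\<in>{Suc (Suc m)..r}. us s xa xb = 0" by auto
      then show "\<not> (\<Sum>s=Suc (Suc m)..r. us s xa xb) > 0" by simp
    qed
    then obtain s where s: "s \<in> {Suc (Suc m)..r}" "us s xa xb > 0" by blast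
    define \<tau> where "\<tau> i = (if i = Suc m then s else if i = s then Suc m else i)" for i
    define vs where "vs i = us (\<tau> i)" for i
    have tau_in: "\<tau> i \<in> {1..r}" if "i \<in> {1..r}" for i using that s sr by (auto simp: \<tau>_def)
    have tau_in2: "Suc 0 \<le> \<tau> i" "\<tau> i \<le> r" if "Suc 0 \<le> i" "i \<le> r" for i
      using tau_in[of i] that by auto
    have tau_inv: "\<tau> (\<tau> i) = i" for i by (auto simp: \<tau>_def)
    have "\<forall>s\<in>{1..r}. G_vert n 1 (vs s)" using us(1) tau_in by (auto simp: vs_def)
    moreover have "u = (\<lambda>a b. \<Sum>s=1..r. vs s a b)"
    proof (intro ext)
      fix a b
      have "(\<Sum>i=1..r. vs i a b) = (\<Sum>i=1..r. us i a b)"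
        by (rule sum.reindex_bij_witness[where i=\<tau> and j=\<tau>])
           (auto simp: tau_inv tau_in2 vs_def)
      then show "u a b = (\<Sum>i=1..r. vs i a b)" using us(2) by simp
    qed
    moreover have "\<forall>l\<le>Suc m. mat_le (C l) (\<lambda>a b. \<Sum>i=1..l. vs i a b)"
    proof (intro allI impI)
      fix l assume l: "l \<le> Suc m"
      have same: "(\<Sum>i=1..l'. vs i a b) = Pre l' a b" if "l' \<le> m" for l' a b
        unfolding Pre_def using that s by (intro sum.cong) (auto simp: vs_def \<tau>_def)
      show "mat_le (C l) (\<lambda>a b. \<Sum>i=1..l. vs i a b)"
      proof (cases "l \<le> m")
        case True
        have "mat_le (\<lambda>a b. C l a b) (\<lambda>a b. \<Sum>s=1..l. us s a b)" using us(3) True by blast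
        then show ?thesis unfolding mat_le_def using same[OF True] by (simp add: Pre_def)
      next
        case False
        then have l: "l = Suc m" using l by simp
        show ?thesis unfolding mat_le_def l
        proof (intro allI)
          fix a b
          have e: "(\<Sum>i=1..Suc m. vs i a b) = Pre m a b + us s a b"
            using same[of m a b] by (simp add: vs_def \<tau>_def)
          show "C (Suc m) a b \<le> (\<Sum>i=1..Suc m. vs i a b)"
          proof (cases "a = xa \<and> b = xb")
            case True
            then have "C (Suc m) a b = C m a b + 1" "us s a b \<ge> 1" using Cs[of a b] s(2) by auto
            then show ?thesis using e CmP[of a b] by linarith
          next
            case False
            then have "C (Suc m) a b = C m a b" using Cs[of a b] by simp
            then show ?thesis using e CmP[of a b] by linarith
          qed
        qed
      qed
    qed
    ultimately show ?thesis unfolding C_def by blast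
  qed
qed

theorem lemma2p6:
  fixes n r k :: nat and u :: "nat \<Rightarrow> nat \<Rightarrow> nat" and pos :: "nat \<Rightarrow> nat \<times> nat"
  assumes "n \<ge> 1" and "r \<ge> 1"
    and "G_vert n r u"
    and "k \<le> r"
    and "\<forall>t\<in>{1..k}. fst (pos t) < n \<and> snd (pos t) < n"
    and "mat_le (\<lambda>a b. \<Sum>t=1..k. E_mat (fst (pos t)) (snd (pos t)) a b) u"
  shows "\<exists>us :: nat \<Rightarrow> nat \<Rightarrow> nat \<Rightarrow> nat.
           (\<forall>s\<in>{1..r}. G_vert n 1 (us s))
         \<and> u = (\<lambda>a b. \<Sum>s=1..r. us s a b)
         \<and> (\<forall>l\<in>{1..k}. mat_le (\<lambda>a b. \<Sum>t=1..l. E_mat (fst (pos t)) (snd (pos t)) a b)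
                                 (\<lambda>a b. \<Sum>s=1..l. us s a b))"
proof -
  obtain us where us: "\<forall>s\<in>{1..r}. G_vert n 1 (us s)" "u = (\<lambda>a b. \<Sum>s=1..r. us s a b)"
    "\<forall>l\<le>k. mat_le (\<lambda>a b. \<Sum>t=1..l. E_mat (fst (pos t)) (snd (pos t)) a b) (\<lambda>a b. \<Sum>s=1..l. us s a b)"
    using main_ind[OF assms(3) assms(4) assms(6)] by blast
  have "\<forall>l\<in>{1..k}. mat_le (\<lambda>a b. \<Sum>t=1..l. E_mat (fst (pos t)) (snd (pos t)) a b) (\<lambda>a b. \<Sum>s=1..l. us s a b)"
    using us(3) by simp
  then show ?thesis using us(1,2) by blast
qed

end
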